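(* Let $(E_{-1},E_0,\partial,\rho,S,\circ,\Omega)$ be an $\mathrm{LWX}$ $2$-algebroid over $M$. Let $[\![e_1,e_2]\!]=\frac12(e_1\circ e_2-e_2\circ e_1)$, $J(e_1,e_2,e_3)=[\![[\![e_1,e_2]\!],e_3]\!]+[\![[\![e_2,e_3]\!],e_1]\!]+[\![[\![e_3,e_1]\!],e_2]\!]$ for $e_i\in\Gamma(\mathcal E)$, and define $T:\Gamma(E_0)\times\Gamma(E_0)\times\Gamma(E_{-1})\to C^\infty(M)$ by $$T(e^0_1,e^0_2,e^1)=\tfrac16\big(S(e^0_1,[\![e^0_2,e^1]\!])+S(e^1,[\![e^0_1,e^0_2]\!])+S(e^0_2,[\![e^1,e^0_1]\!])\big).$$ Then for all $e^0,e^0_1,e^0_2,e^0_3\in\Gamma(E_0)$ and $e^1,e^1_1,e^1_2\in\Gamma(E_{-1})$: $$J(e^0_1,e^0_2,e^0_3)=-\partial\Omega(e^0_1,e^0_2,e^0_3),\qquad J(e^0_1,e^0_2,e^1)=\mathcal D T(e^0_1,e^0_2,e^1)-\Omega(e^0_1,e^0_2,\partial e^1),$$ $$T(\partial e^1_1,e^0,e^1_2)=-T(\partial e^1_2,e^0,e^1_1).$$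
   Context: A Leibniz $2$-algebra $(V_{-1},V_0,d,l_2,l_3)$ consists of a complex of real vector spaces $d:V_{-1}\to V_0$, bilinear maps $l_2:V_{-i}\times V_{-j}\to V_{-i-j}$ for $0\le i+j\le 1$, and a trilinear map $l_3:V_0\times V_0\times V_0\to V_{-1}$ such that for all $w,x,y,z\in V_0$, $m,n\in V_{-1}$: (a) $d\,l_2(x,m)=l_2(x,dm)$; (b) $d\,l_2(m,x)=l_2(dm,x)$; (c) $l_2(dm,n)=l_2(m,dn)$; (d) $d\,l_3(x,y,z)=l_2(x,l_2(y,z))-l_2(l_2(x,y),z)-l_2(y,l_2(x,z))$; (e1) $l_3(x,y,dm)=l_2(x,l_2(y,m))-l_2(l_2(x,y),m)-l_2(y,l_2(x,m))$; (e2) $l_3(x,dm,y)=l_2(x,l_2(m,y))-l_2(l_2(x,m),y)-l_2(m,l_2(x,y))$; (e3) $l_3(dm,x,y)=l_2(m,l_2(x,y))-l_2(l_2(m,x),y)-l_2(x,l_2(m,y))$; (f) $l_2(w,l_3(x,y,z))-l_2(x,l_3(w,y,z))+l_2(y,l_3(w,x,z))+l_2(l_3(w,x,y),z)-l_3(l_2(w,x),y,z)-l_3(x,l_2(w,y),z)-l_3(x,y,l_2(w,z))+l_3(w,l_2(x,y),z)+l_3(w,y,l_2(x,z))-l_3(w,x,l_2(y,z))=0$. An $\mathrm{LWX}$ $2$-algebroid $(E_{-1},E_0,\partial,\rho,S,\circ,\Omega)$ over a manifold $M$ consists of vector bundles $E_{-1},E_0$ over $M$ with $\mathcal E=E_{-1}\oplus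 E_0$; a nondegenerate symmetric bilinear form $S$ on $\mathcal E$ for which $E_0$ and $E_{-1}$ are both isotropic; an $\mathbb R$-bilinear operation $\circ$ on $\Gamma(\mathcal E)$ mapping $\Gamma(E_{-i})\times\Gamma(E_{-j})\to\Gamma(E_{-(i+j)})$ for $0\le i+j\le 1$ (and zero on $\Gamma(E_{-1})\times\Gamma(E_{-1})$), skew-symmetric on $\Gamma(E_0)\times\Gamma(E_0)$; an $E_{-1}$-valued $3$-form $\Omega$ on $E_0$; bundle maps $\partial:E_{-1}\to E_0$ and $\rho:E_0\to TM$ ($\rho$ is extended by zero to $E_{-1}$); such that: (i) $(\Gamma(E_{-1}),\Gamma(E_0),\partial,\circ,\Omega)$ is a Leibniz $2$-algebra (with $d=\partial$, $l_2=\circ$, $l_3=\Omega$); (ii) $e\circ e=\frac12\mathcal D S(e,e)$ for all $e\in\Gamma(\mathcal E)$, where $\mathcal D:C^\infty(M)\to\Gamma(E_{-1})$ is defined by $S(\mathcal D f,e^0)=\rho(e^0)(f)$ for all $e^0\in\Gamma(E_0)$; (iii) $S(\partial e^1_1,e^1_2)=S(e^1_1,\partial e^1_2)$ for $e^1_1,e^1_2\in\Gamma(E_{-1})$; (iv) $\rho(e_1)S(e_2,e_3)=S(e_1\circ e_2,e_3)+S(e_2,e_1\circ e_3)$ for all $e_1,e_2,e_3\in\Gamma(\mathcal E)$; (v) $S(\Omega(e^0_1,e^0_2,e^0_3),e^0_4)=-S(e^0_3,\Omega(e^0_1,e^0_2,e^0_4))$ for all $e^0_i\in\Gamma(E_0)$.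 *)

theory Defs
  imports Complex_Main "HOL-Library.Product_Plus"
begin

definition lin_map :: "('k \<Rightarrow> 'a::ab_group_add \<Rightarrow> 'a) \<Rightarrow> ('k \<Rightarrow> 'b::ab_group_add \<Rightarrow> 'b) \<Rightarrow> ('a \<Rightarrow> 'b) \<Rightarrow> bool" where
  "lin_map s1 s2 f \<longleftrightarrow> (\<forall>a b. f (a + b) = f a + f b) \<and> (\<forall>r a. f (s1 r a) = s2 r (f a))"

definition bilin_map :: "('k \<Rightarrow> 'a::ab_group_add \<Rightarrow> 'a) \<Rightarrow> ('k \<Rightarrow> 'b::ab_group_add \<Rightarrow> 'b) \<Rightarrow> ('k \<Rightarrow> 'c::ab_group_add \<Rightarrow> 'c) \<Rightarrow> ('a \<Rightarrow> 'b \<Rightarrow> 'c) \<Rightarrow> bool" where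
  "bilin_map s1 s2 s3 f \<longleftrightarrow> (\<forall>y. lin_map s1 s3 (\<lambda>x. f x y)) \<and> (\<forall>x. lin_map s2 s3 (f x))"

definition trilin_map :: "('k \<Rightarrow> 'a::ab_group_add \<Rightarrow> 'a) \<Rightarrow> ('k \<Rightarrow> 'b::ab_group_add \<Rightarrow> 'b) \<Rightarrow> ('k \<Rightarrow> 'c::ab_group_add \<Rightarrow> 'c) \<Rightarrow> ('k \<Rightarrow> 'd::ab_group_add \<Rightarrow> 'd) \<Rightarrow> ('a \<Rightarrow> 'b \<Rightarrow> 'c \<Rightarrow> 'd) \<Rightarrow> bool" where
  "trilin_map s1 s2 s3 s4 f \<longleftrightarrow>
     (\<forall>y z. lin_map s1 s4 (\<lambda>x. f x y z)) \<and> (\<forall>x z. lin_map s2 s4 (\<lambda>y. f x y z)) \<and> (\<forall>x y. lin_map s3 s4 (f x y))"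

(* Leibniz 2-algebra (V_{-1}, V_0, d, l_2, l_3) over the reals.
   sm1, sm0: real scalar multiplications on V_{-1}, V_0.
   l_2 is given by its graded pieces
     l00 : V_0 x V_0 -> V_0,  l01 : V_0 x V_{-1} -> V_{-1},  l10 : V_{-1} x V_0 -> V_{-1}. *)
definition leibniz2 ::
  "(real \<Rightarrow> 'v1::ab_group_add \<Rightarrow> 'v1) \<Rightarrow> (real \<Rightarrow> 'v0::ab_group_add \<Rightarrow> 'v0) \<Rightarrow> ('v1 \<Rightarrow> 'v0)
   \<Rightarrow> ('v0 \<Rightarrow> 'v0 \<Rightarrow> 'v0) \<Rightarrow> ('v0 \<Rightarrow> 'v1 \<Rightarrow> 'v1) \<Rightarrow> ('v1 \<Rightarrow> 'v0 \<Rightarrow> 'v1)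
   \<Rightarrow> ('v0 \<Rightarrow> 'v0 \<Rightarrow> 'v0 \<Rightarrow> 'v1) \<Rightarrow> bool" where
  "leibniz2 sm1 sm0 d l00 l01 l10 l3 \<longleftrightarrow>
     module sm1 \<and> module sm0 \<and>
     lin_map sm1 sm0 d \<and>
     bilin_map sm0 sm0 sm0 l00 \<and> bilin_map sm0 sm1 sm1 l01 \<and> bilin_map sm1 sm0 sm1 l10 \<and>
     trilin_map sm0 sm0 sm0 sm1 l3 \<and>
     (\<forall>x m. d (l01 x m) = l00 x (d m)) \<and>
     (\<forall>x m. d (l10 m x) = l00 (d m) x) \<and>
     (\<forall>m n. l01 (d m) n = l10 m (d n)) \<and>
     (\<forall>x y z. d (l3 x y z) = l00 x (l00 y z) - l00 (l00 x y) z - l00 y (l00 x z)) \<and>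
     (\<forall>x y m. l3 x y (d m) = l01 x (l01 y m) - l01 (l00 x y) m - l01 y (l01 x m)) \<and>
     (\<forall>x y m. l3 x (d m) y = l01 x (l10 m y) - l10 (l01 x m) y - l10 m (l00 x y)) \<and>
     (\<forall>x y m. l3 (d m) x y = l10 m (l00 x y) - l10 (l10 m x) y - l01 x (l10 m y)) \<and>
     (\<forall>w x y z.
        l01 w (l3 x y z) - l01 x (l3 w y z) + l01 y (l3 w x z) + l10 (l3 w x y) z
        - l3 (l00 w x) y z - l3 x (l00 w y) z - l3 x y (l00 w z)
        + l3 w (l00 x y) z + l3 w y (l00 x z) - l3 w x (l00 y z) = 0)"

(* Sections of \<E> = E_{-1} \<oplus> E_0 are pairs (e^1, e^0) of sections of E_{-1} and E_0.
   The algebra of smooth functions C^\<infinity>(M) is modelled by the ring 'c;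
   smM, smX are the C^\<infinity>(M)-module structures on \<Gamma>(E_{-1}), \<Gamma>(E_0). *)
definition smE :: "('c \<Rightarrow> 'm \<Rightarrow> 'm) \<Rightarrow> ('c \<Rightarrow> 'x \<Rightarrow> 'x) \<Rightarrow> 'c \<Rightarrow> 'm \<times> 'x \<Rightarrow> 'm \<times> 'x" where
  "smE smM smX f e = (smM f (fst e), smX f (snd e))"

definition rhoE :: "('x \<Rightarrow> 'c \<Rightarrow> 'c) \<Rightarrow> 'm \<times> 'x \<Rightarrow> 'c \<Rightarrow> 'c" where
  "rhoE \<rho> e = \<rho> (snd e)"

definition LWX2 ::
  "('c::{comm_ring_1,real_algebra_1} \<Rightarrow> 'm::ab_group_add \<Rightarrow> 'm) \<Rightarrow> ('c \<Rightarrow> 'x::ab_group_add \<Rightarrow> 'x)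
   \<Rightarrow> ('m \<Rightarrow> 'x) \<Rightarrow> ('x \<Rightarrow> 'c \<Rightarrow> 'c) \<Rightarrow> ('m \<times> 'x \<Rightarrow> 'm \<times> 'x \<Rightarrow> 'c)
   \<Rightarrow> ('m \<times> 'x \<Rightarrow> 'm \<times> 'x \<Rightarrow> 'm \<times> 'x) \<Rightarrow> ('x \<Rightarrow> 'x \<Rightarrow> 'x \<Rightarrow> 'm) \<Rightarrow> ('c \<Rightarrow> 'm) \<Rightarrow> bool" where
  "LWX2 smM smX bd \<rho> S circ \<Omega> D \<longleftrightarrow>
     module smM \<and> module smX \<and>
     lin_map smM smX bd \<and>
     (\<forall>x y f. \<rho> (x + y) f = \<rho> x f + \<rho> y f) \<and>
     (\<forall>g x f. \<rho> (smX g x) f = g * \<rho> x f) \<and>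
     (\<forall>x f g. \<rho> x (f + g) = \<rho> x f + \<rho> x g) \<and>
     (\<forall>x r f. \<rho> x (of_real r * f) = of_real r * \<rho> x f) \<and>
     (\<forall>x f g. \<rho> x (f * g) = f * \<rho> x g + \<rho> x f * g) \<and>
     bilin_map (smE smM smX) (smE smM smX) times S \<and>
     (\<forall>e1 e2. S e1 e2 = S e2 e1) \<and>
     (\<forall>e. (\<forall>e'. S e e' = 0) \<longrightarrow> e = 0) \<and>
     (\<forall>x y. S (0, x) (0, y) = 0) \<and>
     (\<forall>m n. S (m, 0) (n, 0) = 0) \<and>
     bilin_map (\<lambda>r. smE smM smX (of_real r)) (\<lambda>r. smE smM smX (of_real r)) (\<lambda>r. smE smM smX (of_real r)) circ \<and>
     (\<forall>x y. fst (circ (0, x) (0, y)) = 0) \<and>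
     (\<forall>x m. snd (circ (0, x) (m, 0)) = 0) \<and>
     (\<forall>x m. snd (circ (m, 0) (0, x)) = 0) \<and>
     (\<forall>m n. circ (m, 0) (n, 0) = 0) \<and>
     (\<forall>x y. circ (0, x) (0, y) = - circ (0, y) (0, x)) \<and>
     trilin_map smX smX smX smM \<Omega> \<and>
     (\<forall>x y z. \<Omega> x y z = - \<Omega> y x z) \<and>
     (\<forall>x y z. \<Omega> x y z = - \<Omega> x z y) \<and>
     (\<forall>f x. S (D f, 0) (0, x) = \<rho> x f) \<and>
     leibniz2 (\<lambda>r. smM (of_real r)) (\<lambda>r. smX (of_real r)) bd
        (\<lambda>x y. snd (circ (0, x) (0, y))) (\<lambda>x m. fst (circ (0, x) (m, 0)))
        (\<lambda>m x. fst (circ (m, 0) (0, x))) \<Omega> \<and>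
     (\<forall>e. circ e e = smE smM smX (of_real (1/2)) (D (S e e), 0)) \<and>
     (\<forall>m n. S (0, bd m) (n, 0) = S (m, 0) (0, bd n)) \<and>
     (\<forall>e1 e2 e3. rhoE \<rho> e1 (S e2 e3) = S (circ e1 e2) e3 + S e2 (circ e1 e3)) \<and>
     (\<forall>x1 x2 x3 x4. S (\<Omega> x1 x2 x3, 0) (0, x4) = - S (0, x3) (\<Omega> x1 x2 x4, 0))"

definition skbr :: "('c::{comm_ring_1,real_algebra_1} \<Rightarrow> 'm::ab_group_add \<Rightarrow> 'm) \<Rightarrow> ('c \<Rightarrow> 'x::ab_group_add \<Rightarrow> 'x)
   \<Rightarrow> ('m \<times> 'x \<Rightarrow> 'm \<times> 'x \<Rightarrow> 'm \<times> 'x) \<Rightarrow> 'm \<times> 'x \<Rightarrow> 'm \<times> 'x \<Rightarrow> 'm \<times> 'x" where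
  "skbr smM smX circ e1 e2 = smE smM smX (of_real (1/2)) (circ e1 e2 - circ e2 e1)"

definition Jac :: "('c::{comm_ring_1,real_algebra_1} \<Rightarrow> 'm::ab_group_add \<Rightarrow> 'm) \<Rightarrow> ('c \<Rightarrow> 'x::ab_group_add \<Rightarrow> 'x)
   \<Rightarrow> ('m \<times> 'x \<Rightarrow> 'm \<times> 'x \<Rightarrow> 'm \<times> 'x) \<Rightarrow> 'm \<times> 'x \<Rightarrow> 'm \<times> 'x \<Rightarrow> 'm \<times> 'x \<Rightarrow> 'm \<times> 'x" where
  "Jac smM smX circ e1 e2 e3 =
     skbr smM smX circ (skbr smM smX circ e1 e2) e3 + skbr smM smX circ (skbr smM smX circ e2 e3) e1
     + skbr smM smX circ (skbr smM smX circ e3 e1) e2"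

definition Tfun :: "('c::{comm_ring_1,real_algebra_1} \<Rightarrow> 'm::ab_group_add \<Rightarrow> 'm) \<Rightarrow> ('c \<Rightarrow> 'x::ab_group_add \<Rightarrow> 'x)
   \<Rightarrow> ('m \<times> 'x \<Rightarrow> 'm \<times> 'x \<Rightarrow> 'c) \<Rightarrow> ('m \<times> 'x \<Rightarrow> 'm \<times> 'x \<Rightarrow> 'm \<times> 'x) \<Rightarrow> 'x \<Rightarrow> 'x \<Rightarrow> 'm \<Rightarrow> 'c" where
  "Tfun smM smX S circ x1 x2 m = of_real (1/6) *
     (S (0, x1) (skbr smM smX circ (0, x2) (m, 0)) + S (m, 0) (skbr smM smX circ (0, x1) (0, x2))
      + S (0, x2) (skbr smM smX circ (m, 0) (0, x1)))"

end

theory Submission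
  imports Defs
begin

lemma co1: "of_real(1/2)*(of_real(1/2)*(a::'c::real_algebra_1)) = of_real(1/6)*a + of_real(1/2)*(of_real(1/6)*a)"
proof -
  have "of_real(1/2)*(of_real(1/2)*a) = of_real(1/2*(1/2)) * a" by (simp only: of_real_mult mult.assoc)
  also have "(1/2*(1/2)::real) = 1/6 + 1/2*(1/6)" by simp
  also have "of_real (1/6 + 1/2*(1/6)) * a = of_real(1/6)*a + of_real(1/2)*(of_real(1/6)*a)"
    by (simp only: of_real_add of_real_mult distrib_right mult.assoc)
  finally show ?thesis .
qed
lemma co2: "3*(of_real(1/6)*(a::'c::real_algebra_1)) = of_real(1/2)*a"
proof -
  have "3*(of_real(1/6)*a) = of_real(3*(1/6)) * a" by (simp only: of_real_mult mult.assoc of_real_numeral)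
  also have "(3*(1/6)::real) = 1/2" by simp
  finally show ?thesis .
qed

locale LW =
  fixes smM :: "'c::{comm_ring_1,real_algebra_1} \<Rightarrow> 'm::ab_group_add \<Rightarrow> 'm"
    and smX :: "'c \<Rightarrow> 'x::ab_group_add \<Rightarrow> 'x"
    and bd :: "'m \<Rightarrow> 'x" and \<rho> :: "'x \<Rightarrow> 'c \<Rightarrow> 'c"
    and S :: "'m \<times> 'x \<Rightarrow> 'm \<times> 'x \<Rightarrow> 'c"
    and circ :: "'m \<times> 'x \<Rightarrow> 'm \<times> 'x \<Rightarrow> 'm \<times> 'x"
    and \<Omega> :: "'x \<Rightarrow> 'x \<Rightarrow> 'x \<Rightarrow> 'm" and D :: "'c \<Rightarrow> 'm"
  assumes L: "LWX2 smM smX bd \<rho> S circ \<Omega> D"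
begin

definition "c00 x y = snd (circ (0,x) (0,y))"
definition "c01 x m = fst (circ (0,x) (m,0))"
definition "c10 m x = fst (circ (m,0) (0,x))"
definition "P a x = S (a,0) (0,x)"
definition "h = (of_real (1/2) :: 'c)"


lemma MM: "module smM" using L unfolding LWX2_def by (elim conjE) assumption
lemma MX: "module smX" using L unfolding LWX2_def by (elim conjE) assumption
interpretation M: module smM by (rule MM)
interpretation X: module smX by (rule MX)

lemma bd_lin: "lin_map smM smX bd" using L unfolding LWX2_def by (elim conjE) assumption
lemma bd_add: "bd (a + b) = bd a + bd b" using bd_lin unfolding lin_map_def by blast
lemma rho_add1': "\<forall>x y f. \<rho> (x + y) f = \<rho> x f + \<rho> y f" using L unfolding LWX2_def by (elim conjE) assumption
lemma rho_add2': "\<forall>x f g. \<rho> x (f + g) = \<rho> x f + \<rho> x g" using L unfolding LWX2_def by (elim conjE) assumption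
lemma rho_real': "\<forall>x r f. \<rho> x (of_real r * f) = of_real r * \<rho> x f" using L unfolding LWX2_def by (elim conjE) assumption
lemma S_bil: "bilin_map (smE smM smX) (smE smM smX) times S" using L unfolding LWX2_def by (elim conjE) assumption
lemma S_add1: "S (a + b) c = S a c + S b c" using S_bil unfolding bilin_map_def lin_map_def by blast
lemma S_add2: "S c (a + b) = S c a + S c b" using S_bil unfolding bilin_map_def lin_map_def by blast
lemma S_sc1: "S (smE smM smX r a) c = r * S a c" using S_bil unfolding bilin_map_def lin_map_def by blast
lemma S_sym': "\<forall>e1 e2. S e1 e2 = S e2 e1" using L unfolding LWX2_def by (elim conjE) assumption
lemma S_nd': "\<forall>e. (\<forall>e'. S e e' = 0) \<longrightarrow> e = 0" using L unfolding LWX2_def by (elim conjE) assumption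
lemma S00': "\<forall>x y. S (0, x) (0, y) = 0" using L unfolding LWX2_def by (elim conjE) assumption
lemma S11': "\<forall>m n. S (m, 0) (n, 0) = 0" using L unfolding LWX2_def by (elim conjE) assumption
lemma circ_bil: "bilin_map (\<lambda>r. smE smM smX (of_real r)) (\<lambda>r. smE smM smX (of_real r)) (\<lambda>r. smE smM smX (of_real r)) circ" using L unfolding LWX2_def by (elim conjE) assumption
lemma circ_add1: "circ (a + b) c = circ a c + circ b c" using circ_bil unfolding bilin_map_def lin_map_def by blast
lemma circ_add2: "circ c (a + b) = circ c a + circ c b" using circ_bil unfolding bilin_map_def lin_map_def by blast
lemma circ00f': "\<forall>x y. fst (circ (0, x) (0, y)) = 0" using L unfolding LWX2_def by (elim conjE) assumption
lemma circ01s': "\<forall>x m. snd (circ (0, x) (m, 0)) = 0" using L unfolding LWX2_def by (elim conjE) assumption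
lemma circ10s': "\<forall>x m. snd (circ (m, 0) (0, x)) = 0" using L unfolding LWX2_def by (elim conjE) assumption
lemma circ11': "\<forall>m n. circ (m, 0) (n, 0) = 0" using L unfolding LWX2_def by (elim conjE) assumption
lemma circ_skew': "\<forall>x y. circ (0, x) (0, y) = - circ (0, y) (0, x)" using L unfolding LWX2_def by (elim conjE) assumption
lemma DS': "\<forall>f x. S (D f, 0) (0, x) = \<rho> x f" using L unfolding LWX2_def by (elim conjE) assumption
lemma circ_ee': "\<forall>e. circ e e = smE smM smX (of_real (1/2)) (D (S e e), 0)" using L unfolding LWX2_def by (elim conjE) assumption
lemma S_bd': "\<forall>m n. S (0, bd m) (n, 0) = S (m, 0) (0, bd n)" using L unfolding LWX2_def by (elim conjE) assumption
lemma iv': "\<forall>e1 e2 e3. rhoE \<rho> e1 (S e2 e3) = S (circ e1 e2) e3 + S e2 (circ e1 e3)" using L unfolding LWX2_def by (elim conjE) assumption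
lemma v': "\<forall>x1 x2 x3 x4. S (\<Omega> x1 x2 x3, 0) (0, x4) = - S (0, x3) (\<Omega> x1 x2 x4, 0)" using L unfolding LWX2_def by (elim conjE) assumption
lemma lz: "leibniz2 (\<lambda>r. smM (of_real r)) (\<lambda>r. smX (of_real r)) bd
        (\<lambda>x y. snd (circ (0, x) (0, y))) (\<lambda>x m. fst (circ (0, x) (m, 0)))
        (\<lambda>m x. fst (circ (m, 0) (0, x))) \<Omega>" using L unfolding LWX2_def by (elim conjE) assumption

lemmas rho_add1 = rho_add1'[rule_format] and rho_add2 = rho_add2'[rule_format]
  and rho_real = rho_real'[rule_format] and S_sym = S_sym'[rule_format]
  and S_nd = S_nd'[rule_format] and S00 = S00'[rule_format] and S11 = S11'[rule_format]
  and circ00f = circ00f'[rule_format] and circ01s = circ01s'[rule_format]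
  and circ10s = circ10s'[rule_format] and circ11 = circ11'[rule_format]
  and circ_skew = circ_skew'[rule_format] and DS = DS'[rule_format]
  and circ_ee = circ_ee'[rule_format] and S_bd = S_bd'[rule_format]
  and iv = iv'[rule_format] and v = v'[rule_format]

lemma la': "\<forall>x m. bd (c01 x m) = c00 x (bd m)" using lz unfolding leibniz2_def c00_def c01_def c10_def by (elim conjE) assumption
lemma lb': "\<forall>x m. bd (c10 m x) = c00 (bd m) x" using lz unfolding leibniz2_def c00_def c01_def c10_def by (elim conjE) assumption
lemma lc': "\<forall>m n. c01 (bd m) n = c10 m (bd n)" using lz unfolding leibniz2_def c00_def c01_def c10_def by (elim conjE) assumption
lemma ld': "\<forall>x y z. bd (\<Omega> x y z) = c00 x (c00 y z) - c00 (c00 x y) z - c00 y (c00 x z)" using lz unfolding leibniz2_def c00_def c01_def c10_def by (elim conjE) assumption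
lemma le1': "\<forall>x y m. \<Omega> x y (bd m) = c01 x (c01 y m) - c01 (c00 x y) m - c01 y (c01 x m)" using lz unfolding leibniz2_def c00_def c01_def c10_def by (elim conjE) assumption
lemmas la = la'[rule_format] and lb = lb'[rule_format] and lc = lc'[rule_format]
  and ld = ld'[rule_format] and le1 = le1'[rule_format]

lemma addl: assumes "\<And>a b. f (a+b) = f a + f b"
  shows "f (0::'a::ab_group_add) = (0::'b::ab_group_add)" "f (-a) = - f a" "f (a - b) = f a - f b"
proof -
  interpret additive f by unfold_locales (rule assms)
  show "f 0 = 0" "f (-a) = - f a" "f (a - b) = f a - f b" by (rule zero, rule minus, rule diff)
qed

lemma bd_z: "bd (0) = 0" by (rule addl(1)[where f="\<lambda>X. bd (X)"]) (rule bd_add)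
lemma bd_m: "bd (- a) = - bd (a)" by (rule addl(2)[where f="\<lambda>X. bd (X)"]) (rule bd_add)
lemma bd_d: "bd (a - b) = bd (a) - bd (b)" by (rule addl(3)[where f="\<lambda>X. bd (X)"]) (rule bd_add)
lemma S_z1: "S (0) c = 0" by (rule addl(1)[where f="\<lambda>X. S (X) c"]) (rule S_add1)
lemma S_m1: "S (- a) c = - S (a) c" by (rule addl(2)[where f="\<lambda>X. S (X) c"]) (rule S_add1)
lemma S_d1: "S (a - b) c = S (a) c - S (b) c" by (rule addl(3)[where f="\<lambda>X. S (X) c"]) (rule S_add1)
lemma S_z2: "S c (0) = 0" by (rule addl(1)[where f="\<lambda>X. S c (X)"]) (rule S_add2)
lemma S_m2: "S c (- a) = - S c (a)" by (rule addl(2)[where f="\<lambda>X. S c (X)"]) (rule S_add2)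
lemma S_d2: "S c (a - b) = S c (a) - S c (b)" by (rule addl(3)[where f="\<lambda>X. S c (X)"]) (rule S_add2)
lemma circ_z1: "circ (0) c = 0" by (rule addl(1)[where f="\<lambda>X. circ (X) c"]) (rule circ_add1)
lemma circ_m1: "circ (- a) c = - circ (a) c" by (rule addl(2)[where f="\<lambda>X. circ (X) c"]) (rule circ_add1)
lemma circ_d1: "circ (a - b) c = circ (a) c - circ (b) c" by (rule addl(3)[where f="\<lambda>X. circ (X) c"]) (rule circ_add1)
lemma circ_z2: "circ c (0) = 0" by (rule addl(1)[where f="\<lambda>X. circ c (X)"]) (rule circ_add2)
lemma circ_m2: "circ c (- a) = - circ c (a)" by (rule addl(2)[where f="\<lambda>X. circ c (X)"]) (rule circ_add2)
lemma circ_d2: "circ c (a - b) = circ c (a) - circ c (b)" by (rule addl(3)[where f="\<lambda>X. circ c (X)"]) (rule circ_add2)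
lemma rho_z1: "\<rho> (0) c = 0" by (rule addl(1)[where f="\<lambda>X. \<rho> (X) c"]) (rule rho_add1)
lemma rho_m1: "\<rho> (- a) c = - \<rho> (a) c" by (rule addl(2)[where f="\<lambda>X. \<rho> (X) c"]) (rule rho_add1)
lemma rho_d1: "\<rho> (a - b) c = \<rho> (a) c - \<rho> (b) c" by (rule addl(3)[where f="\<lambda>X. \<rho> (X) c"]) (rule rho_add1)
lemma rho_z2: "\<rho> c (0) = 0" by (rule addl(1)[where f="\<lambda>X. \<rho> c (X)"]) (rule rho_add2)
lemma rho_m2: "\<rho> c (- a) = - \<rho> c (a)" by (rule addl(2)[where f="\<lambda>X. \<rho> c (X)"]) (rule rho_add2)
lemma rho_d2: "\<rho> c (a - b) = \<rho> c (a) - \<rho> c (b)" by (rule addl(3)[where f="\<lambda>X. \<rho> c (X)"]) (rule rho_add2)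

lemma circ00: "circ (0,x) (0,y) = (0, c00 x y)" by (simp add: prod_eq_iff circ00f c00_def)
lemma circ01: "circ (0,x) (m,0) = (c01 x m, 0)" by (simp add: prod_eq_iff circ01s c01_def)
lemma circ10: "circ (m,0) (0,x) = (c10 m x, 0)" by (simp add: prod_eq_iff circ10s c10_def)

lemma c00_skew: "c00 y x = - c00 x y" using circ_skew[of x y] by (simp add: c00_def)
lemma c00_add1: "c00 (x + y) z = c00 x z + c00 y z"
  using circ_add1[of "(0,x)" "(0,y)" "(0,z)"] by (simp add: c00_def)
lemma c00_add2: "c00 z (x + y) = c00 z x + c00 z y"
  using circ_add2[of "(0,z)" "(0,x)" "(0,y)"] by (simp add: c00_def)
lemma c01_add1: "c01 (x + y) z = c01 x z + c01 y z"
  using circ_add1[of "(0,x)" "(0,y)" "(z,0)"] by (simp add: c01_def)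
lemma c01_add2: "c01 z (x + y) = c01 z x + c01 z y"
  using circ_add2[of "(0,z)" "(x,0)" "(y,0)"] by (simp add: c01_def)
lemma c00_z1: "c00 (0) c = 0" by (rule addl(1)[where f="\<lambda>X. c00 (X) c"]) (rule c00_add1)
lemma c00_m1: "c00 (- a) c = - c00 (a) c" by (rule addl(2)[where f="\<lambda>X. c00 (X) c"]) (rule c00_add1)
lemma c00_d1: "c00 (a - b) c = c00 (a) c - c00 (b) c" by (rule addl(3)[where f="\<lambda>X. c00 (X) c"]) (rule c00_add1)
lemma c00_z2: "c00 c (0) = 0" by (rule addl(1)[where f="\<lambda>X. c00 c (X)"]) (rule c00_add2)
lemma c00_m2: "c00 c (- a) = - c00 c (a)" by (rule addl(2)[where f="\<lambda>X. c00 c (X)"]) (rule c00_add2)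
lemma c00_d2: "c00 c (a - b) = c00 c (a) - c00 c (b)" by (rule addl(3)[where f="\<lambda>X. c00 c (X)"]) (rule c00_add2)
lemma c01_z1: "c01 (0) c = 0" by (rule addl(1)[where f="\<lambda>X. c01 (X) c"]) (rule c01_add1)
lemma c01_m1: "c01 (- a) c = - c01 (a) c" by (rule addl(2)[where f="\<lambda>X. c01 (X) c"]) (rule c01_add1)
lemma c01_d1: "c01 (a - b) c = c01 (a) c - c01 (b) c" by (rule addl(3)[where f="\<lambda>X. c01 (X) c"]) (rule c01_add1)
lemma c01_z2: "c01 c (0) = 0" by (rule addl(1)[where f="\<lambda>X. c01 c (X)"]) (rule c01_add2)
lemma c01_m2: "c01 c (- a) = - c01 c (a)" by (rule addl(2)[where f="\<lambda>X. c01 c (X)"]) (rule c01_add2)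
lemma c01_d2: "c01 c (a - b) = c01 c (a) - c01 c (b)" by (rule addl(3)[where f="\<lambda>X. c01 c (X)"]) (rule c01_add2)

lemma P_add1: "P (a + b) x = P a x + P b x" using S_add1[of "(a,0)" "(b,0)"] by (simp add: P_def)
lemma P_add2: "P a (x + y) = P a x + P a y" using S_add2[of "(a,0)" "(0,x)" "(0,y)"] by (simp add: P_def)
lemma P_z1: "P (0) c = 0" by (rule addl(1)[where f="\<lambda>X. P (X) c"]) (rule P_add1)
lemma P_m1: "P (- a) c = - P (a) c" by (rule addl(2)[where f="\<lambda>X. P (X) c"]) (rule P_add1)
lemma P_d1: "P (a - b) c = P (a) c - P (b) c" by (rule addl(3)[where f="\<lambda>X. P (X) c"]) (rule P_add1)
lemma P_z2: "P c (0) = 0" by (rule addl(1)[where f="\<lambda>X. P c (X)"]) (rule P_add2)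
lemma P_m2: "P c (- a) = - P c (a)" by (rule addl(2)[where f="\<lambda>X. P c (X)"]) (rule P_add2)
lemma P_d2: "P c (a - b) = P c (a) - P c (b)" by (rule addl(3)[where f="\<lambda>X. P c (X)"]) (rule P_add2)
lemma P_sc: "P (smM r a) x = r * P a x" using S_sc1[of r "(a,0)" "(0,x)"] by (simp add: P_def smE_def)
lemma P_sym: "S (0,x) (a,0) = P a x" by (simp add: P_def S_sym)

lemma nd: assumes "\<And>x. P a x = P b x" shows "a = b"
proof -
  have "(a - b, 0::'x) = 0"
  proof (rule S_nd)
    fix e' :: "'m \<times> 'x"
    have e: "e' = (fst e', 0) + (0, snd e')" by simp
    have "S (a - b, 0) e' = S (a - b, 0) (fst e', 0) + S (a - b, 0) (0, snd e')"
      by (subst e, rule S_add2)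
    also have "\<dots> = 0" using assms[of "snd e'"] by (simp add: S11 P_d1 P_def[symmetric])
    finally show "S (a - b, 0) e' = 0" .
  qed
  thus ?thesis by (simp add: zero_prod_def)
qed

lemma PD: "P (D f) x = \<rho> x f" by (simp add: P_def DS)
lemma D_add: "D (f + g) = D f + D g" by (rule nd) (simp add: PD P_add1 rho_add2)
lemma D_z: "D (0) = 0" by (rule addl(1)[where f="\<lambda>X. D (X)"]) (rule D_add)
lemma D_m: "D (- a) = - D (a)" by (rule addl(2)[where f="\<lambda>X. D (X)"]) (rule D_add)
lemma D_d: "D (a - b) = D (a) - D (b)" by (rule addl(3)[where f="\<lambda>X. D (X)"]) (rule D_add)

lemma hh: "h + h = 1" unfolding h_def by (simp flip: of_real_add)
lemma Mhh: "smM h a + smM h a = a" by (simp flip: M.scale_left_distrib add: hh)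
lemma Xhh: "smX h a + smX h a = a" by (simp flip: X.scale_left_distrib add: hh)
lemma rho_h: "\<rho> x (h * f) = h * \<rho> x f" unfolding h_def by (rule rho_real)
lemma rho_realr: "\<rho> x (f * of_real r) = of_real r * \<rho> x f" by (simp add: mult.commute[of f] rho_real)
lemma rho_num: "\<rho> x (numeral n * f) = numeral n * \<rho> x f" using rho_real[of x "numeral n" f] by simp
lemma rho_numr: "\<rho> x (f * numeral n) = numeral n * \<rho> x f" by (simp add: mult.commute[of f] rho_num)
lemma D_h: "D (h * f) = smM h (D f)" by (rule nd) (simp add: PD P_sc rho_h)

lemma P_c01: "P (c01 x v) z = \<rho> x (P v z) - P v (c00 x z)"
  using iv[of "(0,x)" "(v,0)" "(0,z)"] by (simp add: rhoE_def circ01 circ00 P_def)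
lemma Pbd: "P m (bd a) = P a (bd m)"
  using S_bd[of m a] by (simp add: P_def S_sym)
lemma POm: "P (\<Omega> x y z) w = - P (\<Omega> x y w) z"
  using v[of x y z w] by (simp add: P_def S_sym)

lemma c10: "c10 m x = D (P m x) - c01 x m"
proof -
  have e: "(m, x) = (m, 0) + (0, x)" by simp
  have "circ ((m,0) + (0,x)) ((m,0) + (0,x)) = circ (m,0) (m,0) + circ (m,0) (0,x) + (circ (0,x) (m,0) + circ (0,x) (0,x))"
    by (simp only: circ_add1 circ_add2 add_ac)
  hence "circ (m,x) (m,x) = circ (m,0) (m,0) + circ (m,0) (0,x) + (circ (0,x) (m,0) + circ (0,x) (0,x))"
    by (simp only: e[symmetric])
  hence "c10 m x + c01 x m = smM h (D (S (m,x) (m,x)))"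
    using circ_ee[of "(m,x)"] by (simp add: circ11 circ10 circ01 circ00 smE_def h_def)
  also have "S ((m,0)+(0,x)) ((m,0)+(0,x)) = S (m,0) (m,0) + S (m,0) (0,x) + (S (0,x) (m,0) + S (0,x) (0,x))"
    by (simp only: S_add1 S_add2 add_ac)
  hence "S (m,x) (m,x) = P m x + P m x"
    by (simp only: e[symmetric]) (simp add: S11 S00 P_def S_sym[of "(0,x)"])
  finally have "c10 m x + c01 x m = D (P m x)" by (simp only: D_add M.scale_right_distrib Mhh)
  thus ?thesis by (simp add: eq_diff_eq)
qed


definition "B x m = c01 x m - smM h (D (P m x))"

lemma skbr00: "skbr smM smX circ (0,x) (0,y) = (0, c00 x y)"
  unfolding skbr_def smE_def circ00 h_def[symmetric] using c00_skew[of y x] by (simp add: Xhh X.scale_right_distrib)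
lemma skbr01: "skbr smM smX circ (0,x) (m,0) = (B x m, 0)"
proof -
  have "smM h (c01 x m - c10 m x) = smM h (c01 x m) + smM h (c01 x m) - smM h (D (P m x))"
    by (simp add: c10 algebra_simps)
  thus ?thesis unfolding skbr_def smE_def circ01 circ10 h_def[symmetric] B_def by (simp add: Mhh)
qed
lemma skbr10: "skbr smM smX circ (m,0) (0,x) = (- B x m, 0)"
proof -
  have "smM h (c10 m x - c01 x m) = smM h (D (P m x)) - (smM h (c01 x m) + smM h (c01 x m))"
    by (simp add: c10 algebra_simps)
  thus ?thesis unfolding skbr_def smE_def circ01 circ10 h_def[symmetric] B_def by (simp add: Mhh)
qed

lemma B_m: "B x (- v) = - B x v" by (simp add: B_def c01_m2 P_m1 D_m)

lemma part1: "Jac smM smX circ (0, x1) (0, x2) (0, x3) = (0, - bd (\<Omega> x1 x2 x3))"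
proof -
  have a: "c00 x1 (c00 x2 x3) = - c00 (c00 x2 x3) x1" by (rule c00_skew)
  have d: "c00 x2 (c00 x3 x1) = - c00 (c00 x3 x1) x2" by (rule c00_skew)
  have b: "c00 x2 (c00 x1 x3) = - c00 (c00 x1 x3) x2" by (rule c00_skew)
  have c: "c00 x1 x3 = - c00 x3 x1" by (rule c00_skew)
  show ?thesis unfolding Jac_def by (simp add: skbr00 ld a b c d c00_m1 c00_m2)
qed

lemma hom: "\<rho> (c00 x y) (P m z) = \<rho> x (\<rho> y (P m z)) - \<rho> y (\<rho> x (P m z))"
proof -
  have "P (\<Omega> x y (bd m)) z + P m (bd (\<Omega> x y z)) = 0"
    by (simp add: Pbd[of m] POm[of x y z])
  thus ?thesis by (simp add: le1 ld P_add1 P_d1 P_add2 P_d2 P_c01 rho_add2 rho_d2 algebra_simps)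
qed

lemma part2: "Jac smM smX circ (0, x1) (0, x2) (m, 0)
              = (D (Tfun smM smX S circ x1 x2 m) - \<Omega> x1 x2 (bd m), 0)"
proof -
  have J: "Jac smM smX circ (0, x1) (0, x2) (m, 0) = (B (c00 x1 x2) m - B x1 (B x2 m) + B x2 (B x1 m), 0)"
    unfolding Jac_def by (simp add: skbr00 skbr01 skbr10 B_m)
  have "B (c00 x1 x2) m - B x1 (B x2 m) + B x2 (B x1 m) = D (Tfun smM smX S circ x1 x2 m) - \<Omega> x1 x2 (bd m)"
  proof (rule nd)
    fix y
    have sk: "c00 x2 x1 = - c00 x1 x2" by (rule c00_skew)
    show "P (B (c00 x1 x2) m - B x1 (B x2 m) + B x2 (B x1 m)) y = P (D (Tfun smM smX S circ x1 x2 m) - \<Omega> x1 x2 (bd m)) y"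
      unfolding Tfun_def skbr00 skbr01 skbr10 P_sym P_def[symmetric]
      apply (simp add: B_def le1 P_add1 P_d1 P_m1 P_add2 P_d2 P_m2 P_c01 P_sc PD rho_add2 rho_d2 rho_m2 rho_h rho_real rho_realr rho_num rho_numr hom sk algebra_simps)
      apply (simp only: h_def co1 co2)
      by (simp add: add_ac)
  qed
  thus ?thesis using J by simp
qed


lemma F1: "\<rho> (bd n) (P m x) = 0"
proof -
  have 3: "c00 x (bd m) = - c00 (bd m) x" by (rule c00_skew)
  have 4: "P m (bd n) = P n (bd m)" by (rule Pbd)
  have e1: "P n (c00 (bd m) x) = P (c10 m x) (bd n)" by (simp only: lb[symmetric] Pbd[of n])
  have e2: "P (c10 m x) (bd n) = \<rho> (bd n) (P m x) - \<rho> x (P m (bd n)) + P m (c00 x (bd n))"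
    by (simp add: c10 P_d1 PD P_c01)
  have e3: "P m (c00 x (bd n)) = P (c01 x n) (bd m)" by (simp only: la[symmetric] Pbd[of m])
  have e4: "P (c01 x n) (bd m) = \<rho> x (P n (bd m)) + P n (c00 (bd m) x)" by (simp add: P_c01 3 P_m2)
  from e1 e2 e3 e4 4 show ?thesis by simp
qed

lemma AB: "P m2 (c00 (bd m1) x) + P m1 (c00 (bd m2) x) = - \<rho> x (P m2 (bd m1))"
proof -
  have a: "\<rho> (bd m1) (P m2 x) = P (c01 (bd m1) m2) x + P m2 (c00 (bd m1) x)" by (simp add: P_c01)
  have b: "\<rho> (bd m2) (P m1 x) = P (c01 (bd m2) m1) x + P m1 (c00 (bd m2) x)" by (simp add: P_c01)
  have c: "c01 (bd m1) m2 = D (P m1 (bd m2)) - c01 (bd m2) m1" by (rule trans[OF lc c10])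
  have d: "P m1 (bd m2) = P m2 (bd m1)" by (rule Pbd)
  have e: "P (c01 (bd m1) m2) x = \<rho> x (P m2 (bd m1)) - P (c01 (bd m2) m1) x"
    by (simp only: c d P_d1 PD)
  have a': "P m2 (c00 (bd m1) x) = - P (c01 (bd m1) m2) x"
    using a unfolding F1 by (metis add_eq_0_iff)
  have b': "P m1 (c00 (bd m2) x) = - P (c01 (bd m2) m1) x"
    using b unfolding F1 by (metis add_eq_0_iff)
  show ?thesis unfolding a' b' e by (simp add: algebra_simps)
qed

lemma T_form: "Tfun smM smX S circ (bd m1) x m2 = of_real (1/6) * (3 * P m2 (c00 (bd m1) x) + (1 + h) * \<rho> x (P m2 (bd m1)))"
proof -
  have sk: "c00 x (bd m1) = - c00 (bd m1) x" by (rule c00_skew)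
  show ?thesis
    unfolding Tfun_def skbr00 skbr01 skbr10 P_sym P_def[symmetric]
    by (simp add: B_def P_d1 P_m1 P_sc PD P_c01 F1 sk P_m2 Pbd[of m2] algebra_simps)
qed

lemma fin3: "h + h = 1 \<Longrightarrow> (t::'c) * (3 * (- r - b) + (1 + h) * r) = - (t * (3 * b + (1 + h) * r))"
proof -
  assume hh: "h + h = 1"
  have "t * (3 * (- r - b) + (1 + h) * r) + t * (3 * b + (1 + h) * r) = t * r * ((h + h) - 1)"
    by (simp add: algebra_simps)
  also have "\<dots> = 0" by (simp add: hh)
  finally show ?thesis by (simp add: eq_neg_iff_add_eq_0)
qed

lemma part3: "Tfun smM smX S circ (bd m1) x m2 = - Tfun smM smX S circ (bd m2) x m1"
proof -
  have A: "P m2 (c00 (bd m1) x) = - \<rho> x (P m2 (bd m1)) - P m1 (c00 (bd m2) x)"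
    using AB[of m2 m1 x] by (simp add: algebra_simps)
  have d: "P m1 (bd m2) = P m2 (bd m1)" by (rule Pbd)
  show ?thesis unfolding T_form A d by (rule fin3[OF hh])
qed

end

theorem mainTheorem4:
  fixes smM :: "'c::{comm_ring_1,real_algebra_1} \<Rightarrow> 'm::ab_group_add \<Rightarrow> 'm"
    and smX :: "'c \<Rightarrow> 'x::ab_group_add \<Rightarrow> 'x"
    and bd :: "'m \<Rightarrow> 'x" and \<rho> :: "'x \<Rightarrow> 'c \<Rightarrow> 'c"
    and S :: "'m \<times> 'x \<Rightarrow> 'm \<times> 'x \<Rightarrow> 'c"
    and circ :: "'m \<times> 'x \<Rightarrow> 'm \<times> 'x \<Rightarrow> 'm \<times> 'x"
    and \<Omega> :: "'x \<Rightarrow> 'x \<Rightarrow> 'x \<Rightarrow> 'm" and D :: "'c \<Rightarrow> 'm"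
  assumes reduced: "\<forall>f::'c. f * f = 0 \<longrightarrow> f = 0"
    and lwx: "LWX2 smM smX bd \<rho> S circ \<Omega> D"
  shows "(\<forall>x1 x2 x3. Jac smM smX circ (0, x1) (0, x2) (0, x3) = (0, - bd (\<Omega> x1 x2 x3)))
       \<and> (\<forall>x1 x2 m. Jac smM smX circ (0, x1) (0, x2) (m, 0)
              = (D (Tfun smM smX S circ x1 x2 m) - \<Omega> x1 x2 (bd m), 0))
       \<and> (\<forall>x m1 m2. Tfun smM smX S circ (bd m1) x m2 = - Tfun smM smX S circ (bd m2) x m1)"
proof -
  interpret LW smM smX bd \<rho> S circ \<Omega> D by unfold_locales (rule lwx)
  show ?thesis using part1 part2 part3 by blast
qed

end
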